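(* For $s\in\mathbb R$, as $N\to\infty$, $$\chi^{\mathbb K}_N\big(N^{-1}(1-s(2N)^{-1/2})\big)\sim(2N)^{1/2}f_0(s).$$
   Context: $\chi^{\mathbb K}_N(z)=\sum_{m=0}^{N-1}z^m\prod_{j=1}^m(N-j)$ for $z\in\mathbb R$ is the susceptibility of self-avoiding walk on the complete graph on $N$ vertices (generating function of the number of $m$-step self-avoiding walks from a fixed vertex). $f_0(s)=\int_0^\infty xe^{-\frac14x^4-\frac12sx^2}dx$. *)

theory Defs
  imports "HOL-Analysis.Analysis" "HOL-Library.Landau_Symbols"
begin

text \<open>Susceptibility of self-avoiding walk on the complete graph on N vertices.\<close>
definition chiK :: "nat \<Rightarrow> real \<Rightarrow> real" where
  "chiK N z = (\<Sum>m<N. z ^ m * (\<Prod>j=1..m. real (N - j)))"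

definition f0 :: "real \<Rightarrow> real" where
  "f0 s = integral {0..} (\<lambda>x. x * exp (- (x ^ 4) / 4 - s * x ^ 2 / 2))"

end

theory Submission
  imports Defs "HOL-Real_Asymp.Real_Asymp"
begin


definition aa :: "nat \<Rightarrow> real" where "aa N = sqrt (2 * real N)"
definition TT :: "real \<Rightarrow> nat \<Rightarrow> nat \<Rightarrow> real" where
  "TT s N m = (1 - s / aa N)^m * (\<Prod>j=1..m. 1 - real j / real N)"
definition kk :: "nat \<Rightarrow> real \<Rightarrow> nat" where "kk N x = nat \<lfloor>aa N * x^2 / 2\<rfloor>"
definition FF :: "real \<Rightarrow> nat \<Rightarrow> real \<Rightarrow> real" where
  "FF s N x = (if 0 \<le> x \<and> kk N x < N then x * TT s N (kk N x) else 0)"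

lemma aa_ge1: "N \<ge> 1 \<Longrightarrow> aa N \<ge> 1"
  unfolding aa_def by simp

lemma aa_sq: "(aa N)^2 = 2 * real N"
  unfolding aa_def by simp

lemma L1:
  assumes "N \<ge> 1"
  shows "chiK N ((1 - s * (2 * real N) powr (-1/2)) / real N) = (\<Sum>m<N. TT s N m)"
proof -
  have p: "(2 * real N) powr (-1/2) = 1 / aa N"
    unfolding aa_def by (simp add: powr_minus_divide powr_half_sqrt)
  have "((1 - s / aa N) / real N) ^ m * (\<Prod>j = 1..m. real (N - j)) = TT s N m" if "m < N" for m
  proof -
    have "(\<Prod>j = 1..m. 1 - real j / real N) = (\<Prod>j = 1..m. real (N - j) / real N)"
      using that assms by (intro prod.cong) (auto simp: of_nat_diff field_simps)
    also have "\<dots> = (\<Prod>j = 1..m. real (N - j)) / real N ^ m"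
      by (simp add: prod_dividef)
    finally show ?thesis unfolding TT_def using assms by (simp add: power_divide)
  qed
  then show ?thesis unfolding chiK_def p by (simp add: divide_inverse)
qed



lemma piece:
  fixes c u v :: real
  assumes "u \<le> v"
  shows "((\<lambda>x. x * c) has_integral (c * v^2 / 2 - c * u^2 / 2)) {u..v}"
proof -
  have "((\<lambda>x. x * c) has_integral ((\<lambda>x. c * x^2 / 2) v - (\<lambda>x. c * x^2 / 2) u)) {u..v}"
    by (rule fundamental_theorem_of_calculus[OF assms])
       (auto intro!: derivative_eq_intros simp: has_real_derivative_iff_has_vector_derivative[symmetric])
  then show ?thesis by simp
qed

lemma kk_eq:
  assumes "N \<ge> 1" "sqrt (2 * real k / aa N) \<le> x" "x < sqrt (2 * real (Suc k) / aa N)"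
  shows "kk N x = k"
proof -
  have a: "aa N > 0" using aa_ge1[OF assms(1)] by simp
  have "0 \<le> sqrt (2 * real k / aa N)" using a by simp
  then have x0: "x \<ge> 0" using assms(2) by linarith
  have "(sqrt (2 * real k / aa N))^2 \<le> x^2"
    using assms(2) a by (intro power_mono) auto
  hence "2 * real k / aa N \<le> x^2" using a by (simp add: less_imp_le)
  hence l: "real k \<le> aa N * x^2 / 2" using a by (simp add: field_simps)
  have "x^2 < (sqrt (2 * real (Suc k) / aa N))^2"
    using assms(3) x0 by (intro power_strict_mono) auto
  hence "x^2 < 2 * real (Suc k) / aa N" using a by simp
  hence u: "aa N * x^2 / 2 < real k + 1" using a by (simp add: field_simps)
  have "\<lfloor>aa N * x^2 / 2\<rfloor> = int k" using l u by (intro floor_unique) auto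
  then show ?thesis unfolding kk_def by simp
qed

lemma L2a:
  assumes "N \<ge> 1" "k \<le> N"
  shows "(FF s N has_integral (\<Sum>m<k. TT s N m) / aa N) {0..sqrt (2 * real k / aa N)}"
  using assms(2)
proof (induction k)
  case 0
  then show ?case using has_integral_refl(1)[of "FF s N" 0] by simp
next
  case (Suc k)
  have a: "aa N > 0" using aa_ge1[OF assms(1)] by simp
  define u where "u = sqrt (2 * real k / aa N)"
  define v where "v = sqrt (2 * real (Suc k) / aa N)"
  have u0: "0 \<le> u" unfolding u_def using a by simp
  have uv: "u \<le> v" unfolding u_def v_def using a by (intro real_sqrt_le_mono divide_right_mono) auto
  have "((\<lambda>x. x * TT s N k) has_integral (TT s N k * v^2 / 2 - TT s N k * u^2 / 2)) {u..v}"
    by (rule piece[OF uv])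
  also have "TT s N k * v^2 / 2 - TT s N k * u^2 / 2 = TT s N k / aa N"
    unfolding u_def v_def using a by (simp add: field_simps)
  finally have p: "((\<lambda>x. x * TT s N k) has_integral TT s N k / aa N) {u..v}" .
  have p2: "(FF s N has_integral TT s N k / aa N) {u..v}"
  proof (rule has_integral_spike_finite[OF _ _ p, of "{v}"])
    fix x assume x: "x \<in> {u..v} - {v}"
    have "kk N x = k" using kk_eq[OF assms(1), of k x] x unfolding u_def v_def by auto
    then show "FF s N x = x * TT s N k" unfolding FF_def using x u0 Suc.prems by auto
  qed auto
  have "(FF s N has_integral ((\<Sum>m<k. TT s N m) / aa N + TT s N k / aa N)) {0..v}"
    using has_integral_combine[OF u0 uv Suc.IH[folded u_def] p2] Suc.prems by simp
  then show ?case unfolding v_def by (simp add: add_divide_distrib)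
qed

lemma L2:
  assumes "N \<ge> 1"
  shows "(FF s N has_integral (\<Sum>m<N. TT s N m) / aa N) {0..}"
proof (rule has_integral_on_superset[OF L2a[OF assms order.refl]])
  have a: "aa N > 0" using aa_ge1[OF assms(1)] by simp
  fix x assume x: "x \<notin> {0..sqrt (2 * real N / aa N)}"
  show "FF s N x = 0"
  proof (cases "x < 0")
    case True then show ?thesis unfolding FF_def by simp
  next
    case False
    then have x0: "x \<ge> 0" by simp
    with x have "sqrt (2 * real N / aa N) < x" by auto
    then have "(sqrt (2 * real N / aa N))^2 < x^2"
      using a by (intro power_strict_mono) auto
    hence "2 * real N / aa N < x^2" using a by simp
    hence "real N < aa N * x^2 / 2" using a by (simp add: field_simps)
    hence "N \<le> kk N x" unfolding kk_def by linarith
    then show ?thesis unfolding FF_def by simp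
  qed
qed auto



lemma sum_j: "(\<Sum>j=1..m. real j) = real m * (real m + 1) / 2"
  by (induction m) (auto simp: field_simps)

lemma prod_le_exp:
  assumes "m < N"
  shows "0 \<le> (\<Prod>j=1..m. 1 - real j / real N)"
    "(\<Prod>j=1..m. 1 - real j / real N) \<le> exp (- (real m * (real m + 1) / (2 * real N)))"
proof -
  have N: "real N > 0" using assms by simp
  have f: "0 \<le> 1 - real j / real N" if "j \<in> {1..m}" for j
    using that assms N by (auto simp: field_simps)
  then show "0 \<le> (\<Prod>j=1..m. 1 - real j / real N)" by (intro prod_nonneg) auto
  have "(\<Prod>j=1..m. 1 - real j / real N) \<le> (\<Prod>j=1..m. exp (- (real j / real N)))"
    using f by (intro prod_mono) (auto simp: exp_ge_add_one_self[of "- (real _ / real N)", simplified] )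
  also have "\<dots> = exp (\<Sum>j=1..m. - (real j / real N))" by (simp add: exp_sum)
  also have "(\<Sum>j=1..m. - (real j / real N)) = - ((\<Sum>j=1..m. real j) / real N)"
    by (simp add: sum_divide_distrib sum_negf)
  also have "\<dots> = - (real m * (real m + 1) / (2 * real N))" by (subst sum_j) simp
  finally show "(\<Prod>j=1..m. 1 - real j / real N) \<le> exp (- (real m * (real m + 1) / (2 * real N)))" .
qed

lemma kk_bounds:
  assumes "x \<ge> 0" "N \<ge> 1"
  shows "real (kk N x) \<le> aa N * x^2 / 2" "aa N * x^2 / 2 < real (kk N x) + 1"
proof -
  have a: "aa N > 0" using aa_ge1[OF assms(2)] by simp
  have "aa N * x^2 / 2 \<ge> 0" using a by simp
  then have e: "real (kk N x) = of_int \<lfloor>aa N * x^2 / 2\<rfloor>" unfolding kk_def by simp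
  show "real (kk N x) \<le> aa N * x^2 / 2" unfolding e by (rule of_int_floor_le)
  show "aa N * x^2 / 2 < real (kk N x) + 1" unfolding e by linarith
qed

definition KK :: "real \<Rightarrow> real" where "KK s = (\<bar>s\<bar> + 2)^2 / 4 + 2"

lemma L3: "\<bar>FF s N x\<bar> \<le> exp (KK s - x)"
proof (cases "0 \<le> x \<and> kk N x < N")
  case False then show ?thesis unfolding FF_def by (subst if_not_P[OF False]) simp
next
  case True
  define m where "m = kk N x"
  define a where "a = aa N"
  define y where "y = x^2 / 2"
  have x0: "0 \<le> x" and mN: "m < N" using True m_def by auto
  have N1: "N \<ge> 1" using mN by simp
  have a1: "a \<ge> 1" unfolding a_def using aa_ge1[OF N1] .
  have y0: "y \<ge> 0" unfolding y_def by simp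
  have mu: "real m \<le> a * y" and ml: "a * y < real m + 1"
    using kk_bounds[OF x0 N1] unfolding m_def a_def y_def by (auto simp: mult.assoc)
  have a2: "a^2 = 2 * real N" unfolding a_def by (rule aa_sq)
  have "\<bar>1 - s / a\<bar> \<le> exp (\<bar>s\<bar> / a)"
  proof -
    have "\<bar>1 - s / a\<bar> \<le> 1 + \<bar>s / a\<bar>" by linarith
    also have "\<dots> \<le> exp (\<bar>s / a\<bar>)" by (rule exp_ge_add_one_self)
    finally show ?thesis using a1 by simp
  qed
  hence "\<bar>1 - s / a\<bar>^m \<le> exp (\<bar>s\<bar> / a)^m" by (intro power_mono) auto
  also have "\<dots> = exp (real m * (\<bar>s\<bar> / a))" by (simp add: exp_of_nat_mult[symmetric])
  also have "\<dots> \<le> exp (\<bar>s\<bar> * y)"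
  proof -
    have "real m * (\<bar>s\<bar> / a) \<le> (a * y) * (\<bar>s\<bar> / a)" using mu a1 by (intro mult_right_mono) auto
    also have "\<dots> = \<bar>s\<bar> * y" using a1 by simp
    finally show ?thesis by simp
  qed
  finally have P1: "\<bar>(1 - s / a)^m\<bar> \<le> exp (\<bar>s\<bar> * y)" by (simp add: power_abs)
  have mm: "real m * (real m + 1) \<ge> (a*y - 1) * (a * y)"
  proof (cases "a * y \<ge> 1")
    case True
    then show ?thesis using mu ml by (intro mult_mono) auto
  next
    case False
    then have "(a*y - 1) * (a * y) \<le> 0" using a1 y0 by (intro mult_nonpos_nonneg) auto
    then show ?thesis by (smt (verit) of_nat_0_le_iff mult_nonneg_nonneg)
  qed
  have "real m * (real m + 1) / (2 * real N) \<ge> y^2 - y"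
  proof -
    have "(a*y - 1) * (a * y) / a^2 = y^2 - y / a" using a1 by (simp add: field_simps power2_eq_square)
    also have "y / a \<le> y" using a1 y0 mult_left_mono[of 1 a y] by (simp add: divide_le_eq)
    then have "y^2 - y \<le> y^2 - y / a" by simp
    finally have "y^2 - y \<le> (a*y - 1) * (a * y) / a^2" by simp
    also have "\<dots> \<le> real m * (real m + 1) / a^2" using mm a1 by (intro divide_right_mono) auto
    finally show ?thesis using a2 by simp
  qed
  then have P2: "(\<Prod>j=1..m. 1 - real j / real N) \<le> exp (y - y^2)"
    using prod_le_exp(2)[OF mN] by (smt (verit) exp_le_cancel_iff)
  have P0: "0 \<le> (\<Prod>j=1..m. 1 - real j / real N)" using prod_le_exp(1)[OF mN] .
  have "\<bar>TT s N m\<bar> = \<bar>(1 - s / a)^m\<bar> * (\<Prod>j=1..m. 1 - real j / real N)"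
    unfolding TT_def a_def using P0 by (simp add: abs_mult)
  also have "\<dots> \<le> exp (\<bar>s\<bar> * y) * exp (y - y^2)"
    using P0 P1 P2 by (intro mult_mono) auto
  also have "\<dots> = exp ((\<bar>s\<bar> + 1) * y - y^2)" by (simp add: exp_add[symmetric] algebra_simps)
  finally have T: "\<bar>TT s N m\<bar> \<le> exp ((\<bar>s\<bar> + 1) * y - y^2)" .
  have "\<bar>FF s N x\<bar> = x * \<bar>TT s N m\<bar>" unfolding FF_def m_def using True by (simp add: abs_mult)
  also have "\<dots> \<le> exp x * exp ((\<bar>s\<bar> + 1) * y - y^2)"
    using T x0 by (intro mult_mono) (auto simp: exp_ge_add_one_self order.trans[OF _ exp_ge_add_one_self])
  also have "\<dots> = exp (x + ((\<bar>s\<bar> + 1) * y - y^2))" by (simp add: exp_add)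
  also have "\<dots> \<le> exp (KK s - x)"
  proof -
    have e: "(x-2)^2 = x^2 - 4*x + 4" by (simp add: power2_eq_square algebra_simps)
    have "0 \<le> (x-2)^2" by simp
    then have h1: "2 * x \<le> 2 + y" unfolding y_def e by linarith
    have h2: "(\<bar>s\<bar> + 2) * y - y^2 \<le> (\<bar>s\<bar> + 2)^2 / 4"
      using sum_squares_ge_zero[of "y - (\<bar>s\<bar> + 2)/2" 0] by (simp add: power2_eq_square field_simps)
    show ?thesis unfolding KK_def using h1 h2 by (simp add: algebra_simps)
  qed
  finally show ?thesis .
qed



lemma t1: "(\<lambda>N::nat. 1 / sqrt (2 * real N)) \<longlonglongrightarrow> 0" by real_asymp
lemma t2: "(\<lambda>N::nat. sqrt (2 * real N) / real N) \<longlonglongrightarrow> 0" by real_asymp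

lemma Ebound:
  fixes s :: real and N m :: nat
  defines "a \<equiv> aa N"
  defines "q \<equiv> real m / a"
  defines "E \<equiv> real m * ln (1 - s / a) + (\<Sum>j=1..m. ln (1 - real j / real N))"
  assumes N1: "N \<ge> 1" and sa: "\<bar>s\<bar> / a \<le> 1/2" and mN: "real m \<le> real N / 2"
  shows "TT s N m = exp E" "\<bar>E + (q * s + q^2 + q / a)\<bar> \<le> (2 * q * s^2 + 8 * q^3) / a"
proof -
  have a1: "a \<ge> 1" unfolding a_def using aa_ge1[OF N1] .
  have a2: "a^2 = 2 * real N" unfolding a_def by (rule aa_sq)
  have Npos: "real N > 0" using N1 by simp
  have sa': "\<bar>s / a\<bar> \<le> 1/2" using sa a1 by simp
  have b1: "1 - s / a > 0" using sa' by linarith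
  have jpos: "1 - real j / real N > 0" if "j \<in> {1..m}" for j
  proof -
    have "real j \<le> real N / 2" using that mN by auto
    then show ?thesis using Npos by (simp add: field_simps)
  qed
  have P: "(\<Prod>j=1..m. 1 - real j / real N) > 0" using jpos by (intro prod_pos) auto
  have "TT s N m = exp (ln ((1 - s / a)^m) + ln (\<Prod>j=1..m. 1 - real j / real N))"
    unfolding TT_def a_def[symmetric] using b1 P by (simp only: exp_add exp_ln zero_less_power)
  also have "ln ((1 - s / a)^m) = real m * ln (1 - s / a)" using b1 by (simp add: ln_realpow)
  also have "ln (\<Prod>j=1..m. 1 - real j / real N) = (\<Sum>j=1..m. ln (1 - real j / real N))"
    by (intro ln_prod finite_atLeastAtMost) (metis jpos order_less_irrefl)
  finally show "TT s N m = exp E" unfolding E_def .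
  have B1: "\<bar>ln (1 - s / a) + s / a\<bar> \<le> 2 * (s / a)^2"
    using abs_ln_one_plus_x_minus_x_bound[of "- (s / a)"] sa' by simp
  have B1': "\<bar>real m * ln (1 - s / a) + q * s\<bar> \<le> 2 * q * s^2 / a"
  proof -
    have "\<bar>real m * ln (1 - s / a) + q * s\<bar> = real m * \<bar>ln (1 - s / a) + s / a\<bar>"
    proof -
      have "real m * ln (1 - s / a) + q * s = real m * (ln (1 - s / a) + s / a)"
        unfolding q_def by (simp add: algebra_simps)
      then show ?thesis by (simp add: abs_mult)
    qed
    also have "\<dots> \<le> real m * (2 * (s / a)^2)" using B1 by (intro mult_left_mono) auto
    also have "\<dots> = 2 * q * s^2 / a" unfolding q_def by (simp add: power2_eq_square)
    finally show ?thesis .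
  qed
  have B2: "\<bar>(\<Sum>j=1..m. ln (1 - real j / real N)) + (q^2 + q / a)\<bar> \<le> 8 * q^3 / a"
  proof -
    have S: "(\<Sum>j=1..m. real j / real N) = q^2 + q / a"
    proof -
      have "(\<Sum>j=1..m. real j / real N) = (\<Sum>j=1..m. real j) / real N" by (simp add: sum_divide_distrib)
      also have "\<dots> = real m * (real m + 1) / a^2" unfolding a2 by (subst sum_j) simp
      also have "\<dots> = q^2 + q / a" unfolding q_def using a1 by (simp add: field_simps power2_eq_square)
      finally show ?thesis .
    qed
    have "\<bar>(\<Sum>j=1..m. ln (1 - real j / real N)) + (q^2 + q / a)\<bar>
        = \<bar>\<Sum>j=1..m. ln (1 + - (real j / real N)) - - (real j / real N)\<bar>"
      unfolding S[symmetric] by (simp add: sum.distrib)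
    also have "\<dots> \<le> (\<Sum>j=1..m. \<bar>ln (1 + - (real j / real N)) - - (real j / real N)\<bar>)"
      by (rule sum_abs)
    also have "\<dots> \<le> (\<Sum>j=1..m. 2 * (real m / real N)^2)"
    proof (rule sum_mono)
      fix j assume j: "j \<in> {1..m}"
      have jm: "real j \<le> real m" using j by auto
      have "real j / real N \<le> 1/2" using jm mN Npos by (simp add: field_simps)
      moreover have "0 \<le> real j / real N" by simp
      ultimately have "\<bar>ln (1 + - (real j / real N)) - - (real j / real N)\<bar> \<le> 2 * (- (real j / real N))^2"
        by (intro abs_ln_one_plus_x_minus_x_bound) auto
      also have "\<dots> \<le> 2 * (real m / real N)^2"
        using jm Npos by (simp add: power_mono divide_right_mono)
      finally show "\<bar>ln (1 + - (real j / real N)) - - (real j / real N)\<bar> \<le> 2 * (real m / real N)^2" .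
    qed
    also have "\<dots> = real m * (2 * (real m / real N)^2)" by simp
    also have "\<dots> = 8 * q^3 / a"
    proof -
      have Nq: "real N = a^2 / 2" using a2 by simp
      show ?thesis unfolding q_def Nq using a1 by (simp add: field_simps power2_eq_square power3_eq_cube)
    qed
    finally show ?thesis .
  qed
  show "\<bar>E + (q * s + q^2 + q / a)\<bar> \<le> (2 * q * s^2 + 8 * q^3) / a"
    using B1' B2 unfolding E_def add_divide_distrib by linarith
qed



lemma invA: "(\<lambda>N. 1 / aa N) \<longlonglongrightarrow> 0"
  using t1 unfolding aa_def .

lemma L4:
  assumes x0: "x \<ge> 0"
  shows "(\<lambda>N. FF s N x) \<longlonglongrightarrow> x * exp (- (x^4) / 4 - s * x^2 / 2)"
proof -
  define y where "y = x^2 / 2"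
  have y0: "y \<ge> 0" unfolding y_def by simp
  define Q where "Q N = real (kk N x) / aa N" for N
  define En where "En N = real (kk N x) * ln (1 - s / aa N) +
     (\<Sum>j=1..kk N x. ln (1 - real j / real N))" for N
  have ev1: "eventually (\<lambda>N. N \<ge> (1::nat)) sequentially" by (rule eventually_ge_at_top)
  have "(\<lambda>N. \<bar>s\<bar> * (1 / aa N)) \<longlonglongrightarrow> \<bar>s\<bar> * 0" by (intro tendsto_intros invA)
  then have "eventually (\<lambda>N. \<bar>s\<bar> * (1 / aa N) < 1/2) sequentially"
    by (intro order_tendstoD(2)) auto
  then have ev2: "eventually (\<lambda>N. \<bar>s\<bar> / aa N \<le> 1/2) sequentially"
    by eventually_elim simp
  have "(\<lambda>N. y * (sqrt (2 * real N) / real N)) \<longlonglongrightarrow> y * 0" by (intro tendsto_intros t2)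
  then have "eventually (\<lambda>N. y * (sqrt (2 * real N) / real N) < 1/2) sequentially"
    by (intro order_tendstoD(2)) auto
  then have ev3: "eventually (\<lambda>N. real (kk N x) \<le> real N / 2) sequentially"
    using ev1
  proof eventually_elim
    case (elim N)
    have N0: "real N > 0" using elim by simp
    have "real (kk N x) \<le> aa N * y" using kk_bounds(1)[OF x0 elim(2)] unfolding y_def by simp
    also have "aa N * y = y * (sqrt (2 * real N) / real N) * real N" unfolding aa_def using N0 by simp
    also have "\<dots> \<le> 1/2 * real N" using elim(1) N0 by (intro mult_right_mono) auto
    finally show ?case by simp
  qed
  have Qb: "eventually (\<lambda>N. norm (Q N - y) \<le> 1 / aa N) sequentially"
    using ev1
  proof eventually_elim
    case (elim N)
    have a1: "aa N \<ge> 1" using aa_ge1[OF elim] .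
    have u: "real (kk N x) \<le> aa N * y" and l: "aa N * y < real (kk N x) + 1"
      using kk_bounds[OF x0 elim] unfolding y_def by (auto simp: mult.assoc)
    have "Q N \<le> y" unfolding Q_def using u a1 by (simp add: divide_le_eq mult.commute)
    moreover have "y < Q N + 1 / aa N" unfolding Q_def using l a1 by (simp add: field_simps)
    ultimately show ?case by simp
  qed
  have "(\<lambda>N. Q N - y) \<longlonglongrightarrow> 0" by (rule Lim_null_comparison[OF Qb invA])
  then have Qt: "Q \<longlonglongrightarrow> y" by (rule LIM_zero_cancel)
  have Eb: "eventually (\<lambda>N. norm (En N + (Q N * s + (Q N)^2 + Q N * (1 / aa N))) \<le>
       (2 * Q N * s^2 + 8 * (Q N)^3) * (1 / aa N)) sequentially"
    using ev1 ev2 ev3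
  proof eventually_elim
    case (elim N)
    show ?case using Ebound(2)[OF elim] unfolding En_def Q_def by simp
  qed
  have "(\<lambda>N. (2 * Q N * s^2 + 8 * (Q N)^3) * (1 / aa N)) \<longlonglongrightarrow> (2 * y * s^2 + 8 * y^3) * 0"
    by (intro tendsto_intros Qt invA)
  then have "(\<lambda>N. En N + (Q N * s + (Q N)^2 + Q N * (1 / aa N))) \<longlonglongrightarrow> 0"
    by (intro Lim_null_comparison[OF Eb]) simp
  moreover have "(\<lambda>N. Q N * s + (Q N)^2 + Q N * (1 / aa N)) \<longlonglongrightarrow> y * s + y^2 + y * 0"
    by (intro tendsto_intros Qt invA)
  ultimately have "(\<lambda>N. (En N + (Q N * s + (Q N)^2 + Q N * (1 / aa N))) - (Q N * s + (Q N)^2 + Q N * (1 / aa N)))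
      \<longlonglongrightarrow> 0 - (y * s + y^2 + y * 0)"
    by (rule tendsto_diff)
  then have Et: "En \<longlonglongrightarrow> - (y * s + y^2)" by simp
  have "(\<lambda>N. x * exp (En N)) \<longlonglongrightarrow> x * exp (- (y * s + y^2))" by (intro tendsto_intros Et)
  moreover have "eventually (\<lambda>N. x * exp (En N) = FF s N x) sequentially"
    using ev1 ev2 ev3
  proof eventually_elim
    case (elim N)
    have "kk N x < N" using elim(1,3) by (simp add: field_simps)
    then show ?case unfolding FF_def using x0 Ebound(1)[OF elim] unfolding En_def by simp
  qed
  ultimately have "(\<lambda>N. FF s N x) \<longlonglongrightarrow> x * exp (- (y * s + y^2))"
    using tendsto_cong by force
  moreover have "- (y * s + y^2) = - (x^4) / 4 - s * x^2 / 2"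
    unfolding y_def by (simp add: power2_eq_square field_simps power4_eq_xxxx)
  ultimately show ?thesis by simp
qed



definition gg :: "real \<Rightarrow> real \<Rightarrow> real" where
  "gg s x = x * exp (- (x^4) / 4 - s * x^2 / 2)"

lemma FF0: "FF s 0 = (\<lambda>x. 0)" unfolding FF_def by auto

lemma main_conv:
  shows "gg s integrable_on {0..}" "(\<lambda>N. integral {0..} (FF s N)) \<longlonglongrightarrow> integral {0..} (gg s)"
proof -
  have fi: "FF s N integrable_on {0..}" for N
  proof (cases "N \<ge> 1")
    case True then show ?thesis using L2[OF True] unfolding integrable_on_def by blast
  next
    case False then have "N = 0" by simp
    then show ?thesis using integrable_0 by (simp add: FF0)
  qed
  have A: "(\<lambda>x. exp (KK s) * exp (- 1 * x)) integrable_on {0..}"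
    using integrable_on_cmult_left[OF integrable_on_exp_minus_to_infinity[of 1 0], of "exp (KK s)"] by simp
  have eq: "(\<lambda>x. exp (KK s) * exp (- 1 * x)) = (\<lambda>x. exp (KK s - x))"
    by (simp add: exp_diff exp_minus field_simps)
  have hi: "(\<lambda>x. exp (KK s - x)) integrable_on {0..}" using A unfolding eq .
  have le: "norm (FF s N x) \<le> exp (KK s - x)" for N x using L3 by simp
  have cv: "(\<lambda>N. FF s N x) \<longlonglongrightarrow> gg s x" if "x \<in> {0..}" for x
    using L4[of x s] that unfolding gg_def by simp
  show "gg s integrable_on {0..}" "(\<lambda>N. integral {0..} (FF s N)) \<longlonglongrightarrow> integral {0..} (gg s)"
    using dominated_convergence[OF fi hi le cv] by auto
qed

lemma f0_eq: "f0 s = integral {0..} (gg s)" unfolding f0_def gg_def ..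

lemma f0_pos: "f0 s > 0"
proof -
  define c where "c = exp (- 1/4 - \<bar>s\<bar> / 2)"
  have c0: "c > 0" unfolding c_def by simp
  have p: "((\<lambda>x. x * c) has_integral (c / 2)) {0..1}"
    using piece[of 0 1 c] by simp
  have gc: "continuous_on {0..1} (gg s)" unfolding gg_def by (intro continuous_intros) auto
  have gi: "gg s integrable_on {0..1}" by (rule integrable_continuous_interval[OF gc])
  have "c / 2 \<le> integral {0..1} (gg s)"
  proof -
    have "integral {0..1} (\<lambda>x. x * c) \<le> integral {0..1} (gg s)"
    proof (rule integral_le)
      show "(\<lambda>x. x * c) integrable_on {0..1}" using p unfolding integrable_on_def by blast
      show "gg s integrable_on {0..1}" by (rule gi)
      fix x :: real assume x: "x \<in> {0..1}"
      have x4: "x^4 \<le> 1" using x by (intro power_le_one) auto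
      have x2: "x^2 \<le> 1" using x by (intro power_le_one) auto
      have "s * x^2 \<le> \<bar>s\<bar> * x^2" by (intro mult_right_mono) auto
      also have "\<dots> \<le> \<bar>s\<bar>" using x2 mult_left_mono[OF x2, of "\<bar>s\<bar>"] by simp
      finally have "- 1/4 - \<bar>s\<bar> / 2 \<le> - (x^4) / 4 - s * x^2 / 2" using x4 by simp
      then have "c \<le> exp (- (x^4) / 4 - s * x^2 / 2)" unfolding c_def by simp
      then show "x * c \<le> gg s x" unfolding gg_def using x by (intro mult_left_mono) auto
    qed
    then show ?thesis using integral_unique[OF p] by simp
  qed
  also have "integral {0..1} (gg s) \<le> integral {0..} (gg s)"
    by (rule integral_subset_le) (use gi main_conv(1)[of s] in \<open>auto simp: gg_def\<close>)
  finally show ?thesis unfolding f0_eq using c0 by simp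
qed

theorem proposition1p5:
  fixes s :: real
  shows "(\<lambda>N::nat. chiK N ((1 - s * (2 * real N) powr (-1/2)) / real N))
           \<sim>[at_top] (\<lambda>N. (2 * real N) powr (1/2) * f0 s)"
proof (rule asymp_equivI')
  have fp: "f0 s > 0" by (rule f0_pos)
  have "(\<lambda>N. integral {0..} (FF s N) / f0 s) \<longlonglongrightarrow> f0 s / f0 s"
    using main_conv(2)[of s] fp unfolding f0_eq[symmetric] by (intro tendsto_intros) auto
  then have t: "(\<lambda>N. integral {0..} (FF s N) / f0 s) \<longlonglongrightarrow> 1" using fp by simp
  have "eventually (\<lambda>N. integral {0..} (FF s N) / f0 s =
     chiK N ((1 - s * (2 * real N) powr (-1/2)) / real N) / ((2 * real N) powr (1/2) * f0 s)) sequentially"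
    using eventually_ge_at_top[of 1]
  proof eventually_elim
    case (elim N)
    have "integral {0..} (FF s N) = (\<Sum>m<N. TT s N m) / aa N" using L2[OF elim] by (rule integral_unique)
    moreover have "(2 * real N) powr (1/2) = aa N" unfolding aa_def by (simp add: powr_half_sqrt)
    ultimately show ?case using L1[OF elim, of s] by simp
  qed
  then show "((\<lambda>N. chiK N ((1 - s * (2 * real N) powr (-1/2)) / real N) / ((2 * real N) powr (1/2) * f0 s))
     \<longlongrightarrow> 1) at_top"
    using t tendsto_cong by force
qed

end
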